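(* For $A$ and $B$ as in the setting, the following decomposition formulae hold: \[ e^{A+B} = e^{dcl_{A}(B)}e^{A} + O(\| B \|^2), \qquad e^{A+B} = e^{A} e^{dcr_{A}(B)} + O(\| B \|^2). \] Additionally, if $A$ satisfies $e^{a_j - a_k} \neq 1$ for all $j \neq k$, the following composition formulae hold: \[ e^{B} e^{A} = e^{A + cml_{A}(B)} + O(\| B \|^2), \qquad e^{A} e^{B} = e^{A + cmr_{A}(B)} + O(\| B \|^2), \] where $\| \cdot \|$ denotes the Frobenius norm.
   Context: Let $A, B \in \mathbb{C}^{m \times m}$ be square complex matrices, with $B$ a (sufficiently small) perturbation. Suppose that $A$ is diagonalizable (not necessarily unitarily diagonalizable), and let $A=\sum_i a_i P_i$ be its spectral decomposition, where $a_i$ are the distinct eigenvalues ($a_i \neq a_j$ if $i\neq j$) and $P_i$ are projections satisfying $P_i P_j = \delta_{ij} P_i$ and $\sum_j P_j = I_m$. Define complex numbers $\ell_{jk}(A) := 1$ if $j=k$ and $\ell_{jk}(A) := (e^{a_j - a_k} -1)/(a_j - a_k)$ if $j\neq k$. For any $X \in \mathbb{C}^{m \times m}$ define the linear maps $dcl_{A}(X) := \sum_{j,k} \ell_{jk}(A) P_j X P_k$, $dcr_{A}(X) := \sum_{j,k} \ell_{kj}(A) P_j X P_k$, $cml_{A}(X) := \sum_{j,k} \frac{1}{\ell_{jk}(A)} P_j X P_k$, $cmr_{A}(X) := \sum_{j,k} \frac{1}{\ell_{kj}(A)} P_j X P_k$. *)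

theory Defs
  imports "HOL-Analysis.Analysis"
begin

text \<open>Square complex matrices of size m are modelled as complex^'m^'m (HOL-Analysis),
  with matrix product (**), identity (mat 1); the norm on this type is the
  Euclidean norm of all entries, i.e. the Frobenius norm.\<close>

definition cscale :: "complex \<Rightarrow> complex^'m^'n \<Rightarrow> complex^'m^'n" where
  "cscale c M = (\<chi> i j. c * M $ i $ j)"

definition mexp :: "complex^'m^'m \<Rightarrow> complex^'m^'m" where
  "mexp M = (\<Sum>k. (1 / fact k) *\<^sub>R (((**) M) ^^ k) (mat 1))"

text \<open>The spectral data: eigenvalues a j and projections P j, for j < n.\<close>
definition ell :: "(nat \<Rightarrow> complex) \<Rightarrow> nat \<Rightarrow> nat \<Rightarrow> complex" where
  "ell a j k = (if j = k then 1 else (exp (a j - a k) - 1) / (a j - a k))"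

definition dcl :: "nat \<Rightarrow> (nat \<Rightarrow> complex) \<Rightarrow> (nat \<Rightarrow> complex^'m^'m) \<Rightarrow> complex^'m^'m \<Rightarrow> complex^'m^'m" where
  "dcl n a P X = (\<Sum>j<n. \<Sum>k<n. cscale (ell a j k) (P j ** X ** P k))"

definition dcr :: "nat \<Rightarrow> (nat \<Rightarrow> complex) \<Rightarrow> (nat \<Rightarrow> complex^'m^'m) \<Rightarrow> complex^'m^'m \<Rightarrow> complex^'m^'m" where
  "dcr n a P X = (\<Sum>j<n. \<Sum>k<n. cscale (ell a k j) (P j ** X ** P k))"

definition cml :: "nat \<Rightarrow> (nat \<Rightarrow> complex) \<Rightarrow> (nat \<Rightarrow> complex^'m^'m) \<Rightarrow> complex^'m^'m \<Rightarrow> complex^'m^'m" where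
  "cml n a P X = (\<Sum>j<n. \<Sum>k<n. cscale (1 / ell a j k) (P j ** X ** P k))"

definition cmr :: "nat \<Rightarrow> (nat \<Rightarrow> complex) \<Rightarrow> (nat \<Rightarrow> complex^'m^'m) \<Rightarrow> complex^'m^'m \<Rightarrow> complex^'m^'m" where
  "cmr n a P X = (\<Sum>j<n. \<Sum>k<n. cscale (1 / ell a k j) (P j ** X ** P k))"

definition bigO_sq :: "(complex^'m^'m \<Rightarrow> complex^'m^'m) \<Rightarrow> bool" where
  "bigO_sq f \<longleftrightarrow> (\<exists>C \<delta>. \<delta> > 0 \<and> (\<forall>B. norm B < \<delta> \<longrightarrow> norm (f B) \<le> C * (norm B)\<^sup>2))"

end

theory Submission
  imports Defs
begin


lemma mm_entry_bound:
  fixes X Y :: "complex^'m::finite^'m"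
  shows "cmod ((X ** Y) $ i $ j) \<le> real CARD('m) * norm X * norm Y"
proof -
  have "cmod ((X ** Y) $ i $ j) = cmod (\<Sum>k\<in>UNIV. X$i$k * Y$k$j)"
    by (simp add: matrix_matrix_mult_def)
  also have "\<dots> \<le> (\<Sum>k\<in>UNIV. cmod (X$i$k) * cmod (Y$k$j))"
    by (rule order_trans[OF norm_sum]) (simp add: norm_mult)
  also have "\<dots> \<le> (\<Sum>k\<in>(UNIV::'m set). norm X * norm Y)"
  proof (rule sum_mono)
    fix k
    have a: "cmod (X$i$k) \<le> norm X" using Finite_Cartesian_Product.norm_nth_le[where x="X$i" and i=k] Finite_Cartesian_Product.norm_nth_le[where x=X and i=i] by linarith
    have b: "cmod (Y$k$j) \<le> norm Y" using Finite_Cartesian_Product.norm_nth_le[where x="Y$k" and i=j] Finite_Cartesian_Product.norm_nth_le[where x=Y and i=k] by linarith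
    show "cmod (X$i$k) * cmod (Y$k$j) \<le> norm X * norm Y"
      using a b by (simp add: mult_mono')
  qed
  also have "\<dots> = real CARD('m) * norm X * norm Y" by simp
  finally show ?thesis .
qed

lemma norm_le_l1': "norm (x::'a::real_normed_vector^'n::finite) \<le> (\<Sum>i\<in>UNIV. norm (x$i))"
  unfolding norm_vec_def by (rule L2_set_le_sum) simp

lemma mm_norm:
  fixes X Y :: "complex^'m::finite^'m"
  shows "norm (X ** Y) \<le> real CARD('m) ^ 3 * norm X * norm Y"
proof -
  have "norm (X ** Y) \<le> (\<Sum>i\<in>UNIV. norm ((X**Y)$i))" by (rule norm_le_l1')
  also have "\<dots> \<le> (\<Sum>i\<in>(UNIV::'m set). \<Sum>j\<in>(UNIV::'m set). real CARD('m) * norm X * norm Y)"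
  proof (rule sum_mono)
    fix i
    have "norm ((X**Y)$i) \<le> (\<Sum>j\<in>UNIV. norm ((X**Y)$i$j))" by (rule norm_le_l1')
    also have "\<dots> \<le> (\<Sum>j\<in>(UNIV::'m set). real CARD('m) * norm X * norm Y)"
      by (rule sum_mono) (simp add: mm_entry_bound)
    finally show "norm ((X**Y)$i) \<le> (\<Sum>j\<in>(UNIV::'m set). real CARD('m) * norm X * norm Y)" .
  qed
  also have "\<dots> = real CARD('m) ^ 3 * norm X * norm Y" by (simp add: power3_eq_cube)
  finally show ?thesis .
qed

lemma mm_add_left: "((a::complex^'m::finite^'m) + a') ** b = a ** b + a' ** b"
  by (simp add: matrix_matrix_mult_def vec_eq_iff sum.distrib distrib_right)

lemma mm_scaleR_left: "(r *\<^sub>R (a::complex^'m::finite^'m)) ** b = r *\<^sub>R (a ** b)"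
  unfolding vec_eq_iff matrix_matrix_mult_def
  by (simp add: scaleR_sum_right)

lemma mm_scaleR_right: "(a::complex^'m::finite^'m) ** (r *\<^sub>R b) = r *\<^sub>R (a ** b)"
  unfolding vec_eq_iff matrix_matrix_mult_def
  by (simp add: scaleR_sum_right)

lemma mm_bounded: "\<exists>K. \<forall>x y. norm ((x::complex^'m::finite^'m) ** (y::complex^'m^'m)) \<le> norm x * norm y * K"
proof (intro exI allI)
  fix x y :: "complex^'m^'m"
  show "norm (x ** y) \<le> norm x * norm y * real CARD('m) ^ 3"
    using mm_norm[of x y] by (simp add: ac_simps)
qed

lemma mm_bilinear: "bounded_bilinear ((**) :: complex^'m::finite^'m \<Rightarrow> complex^'m^'m \<Rightarrow> complex^'m^'m)"
  by (rule bounded_bilinear.intro[OF mm_add_left matrix_add_ldistrib mm_scaleR_left mm_scaleR_right mm_bounded])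

lemma cscale_norm: "norm (cscale c (M::complex^'m::finite^'n::finite)) = cmod c * norm M"
proof -
  have row: "norm ((cscale c M) $ i) = cmod c * norm (M $ i)" for i
    by (simp add: norm_vec_def cscale_def L2_set_right_distrib norm_mult)
  show ?thesis unfolding norm_vec_def[of "cscale c M"] norm_vec_def[of M]
    by (simp add: row L2_set_right_distrib)
qed

lemma cscale_lin: "bounded_linear (\<lambda>c. cscale c (M::complex^'m::finite^'n::finite))"
proof (rule bounded_linear_intro[where K="norm M"])
  fix c d :: complex and r :: real
  show "cscale (c + d) M = cscale c M + cscale d M"
    by (simp add: cscale_def vec_eq_iff distrib_right)
  show "cscale (r *\<^sub>R c) M = r *\<^sub>R cscale c M"
    unfolding cscale_def vec_eq_iff by simp
  show "norm (cscale c M) \<le> norm c * norm M" by (simp add: cscale_norm)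
qed

lemma cscale_lin2: "bounded_linear (cscale c :: complex^'m::finite^'n::finite \<Rightarrow> _)"
proof (rule bounded_linear_intro[where K="cmod c"])
  fix M N :: "complex^'m^'n" and r :: real
  show "cscale c (M + N) = cscale c M + cscale c N"
    by (simp add: cscale_def vec_eq_iff distrib_left)
  show "cscale c (r *\<^sub>R M) = r *\<^sub>R cscale c M"
    by (simp add: cscale_def vec_eq_iff scaleR_conv_of_real mult.left_commute)
  show "norm (cscale c M) \<le> norm M * cmod c" by (simp add: cscale_norm)
qed



definition pw :: "complex^'m::finite^'m \<Rightarrow> nat \<Rightarrow> complex^'m^'m" where
  "pw M k = (((**) M) ^^ k) (mat 1)"

lemma pw_0[simp]: "pw M 0 = mat 1" by (simp add: pw_def)
lemma pw_Suc[simp]: "pw M (Suc k) = M ** pw M k" by (simp add: pw_def)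

lemma mexp_pw: "mexp M = (\<Sum>k. (1 / fact k) *\<^sub>R pw M k)"
  by (simp add: mexp_def pw_def)

definition K0 :: "'m::finite itself \<Rightarrow> real" where "K0 (t::'m itself) = real CARD('m) ^ 3"
definition c0 :: "'m::finite itself \<Rightarrow> real" where
  "c0 (t::'m itself) = max 1 (norm (mat 1 :: complex^'m^'m))"

lemma K0_ge1: "K0 TYPE('m::finite) \<ge> 1"
  by (simp add: K0_def)
lemma c0_ge1: "c0 TYPE('m::finite) \<ge> 1" by (simp add: c0_def)

lemma mmn: "norm ((X::complex^'m::finite^'m) ** (Y::complex^'m^'m)) \<le> K0 TYPE('m) * norm X * norm Y"
  using mm_norm[of X Y] by (simp add: K0_def)

lemma pw_bound: "norm (pw (M::complex^'m::finite^'m) k) \<le> c0 TYPE('m) * (K0 TYPE('m) * norm M) ^ k"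
proof (induction k)
  case 0 show ?case by (simp add: c0_def)
next
  case (Suc k)
  have "norm (pw M (Suc k)) \<le> K0 TYPE('m) * norm M * norm (pw M k)" using mmn by simp
  also have "\<dots> \<le> K0 TYPE('m) * norm M * (c0 TYPE('m) * (K0 TYPE('m) * norm M) ^ k)"
    using Suc K0_ge1[where 'm='m] by (intro mult_left_mono) auto
  also have "\<dots> = c0 TYPE('m) * (K0 TYPE('m) * norm M) ^ Suc k" by simp
  finally show ?case .
qed

lemma summable_pw: "summable (\<lambda>k. (1 / fact k) *\<^sub>R pw (M::complex^'m::finite^'m) k)"
proof (rule summable_comparison_test')
  show "summable (\<lambda>k. c0 TYPE('m) * (inverse (fact k) * (K0 TYPE('m) * norm M) ^ k))"
    by (intro summable_mult summable_exp)
  fix k :: nat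
  have "norm ((1 / fact k) *\<^sub>R pw M k) = (1 / fact k) * norm (pw M k)" by simp
  also have "\<dots> \<le> (1 / fact k) * (c0 TYPE('m) * (K0 TYPE('m) * norm M) ^ k)"
    by (intro mult_left_mono pw_bound) auto
  finally show "norm ((1 / fact k) *\<^sub>R pw M k) \<le> c0 TYPE('m) * (inverse (fact k) * (K0 TYPE('m) * norm M) ^ k)"
    by (simp add: field_simps)
qed

lemma mexp_sums: "(\<lambda>k. (1 / fact k) *\<^sub>R pw (M::complex^'m::finite^'m) k) sums mexp M"
  unfolding mexp_pw using summable_pw by (rule summable_sums)

fun Lk :: "complex^'m::finite^'m \<Rightarrow> complex^'m^'m \<Rightarrow> nat \<Rightarrow> complex^'m^'m" where
  "Lk A X 0 = 0"
| "Lk A X (Suc k) = X ** pw A k + A ** Lk A X k"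

lemmas bl = bounded_bilinear.add_left[OF mm_bilinear] bounded_bilinear.add_right[OF mm_bilinear]
  bounded_bilinear.diff_left[OF mm_bilinear] bounded_bilinear.diff_right[OF mm_bilinear]

lemma R_rec: "pw (A+X) (Suc k) - pw A (Suc k) - Lk A X (Suc k)
   = (A + X) ** (pw (A+X) k - pw A k - Lk A X k) + X ** Lk A X k"
proof -
  define R where "R = pw (A+X) k - pw A k - Lk A X k"
  have e: "pw (A+X) k = pw A k + Lk A X k + R" by (simp add: R_def)
  show ?thesis unfolding R_def[symmetric] by (simp add: e bl algebra_simps)
qed

lemma Lk_bound:
  fixes A X :: "complex^'m::finite^'m"
  defines "b \<equiv> K0 TYPE('m) * (norm A + norm X + 1)"
  shows "norm (Lk A X k) \<le> c0 TYPE('m) * real k * b ^ k * norm X"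
proof (induction k)
  case 0 show ?case by simp
next
  case (Suc k)
  let ?K = "K0 TYPE('m)" and ?c = "c0 TYPE('m)"
  have K1: "?K \<ge> 1" by (rule K0_ge1)
  have c1: "?c \<ge> 1" by (rule c0_ge1)
  have Kb: "?K \<le> b" unfolding b_def using K1 by (simp add: mult_le_cancel_left1)
  have b1: "b \<ge> 1" using Kb K1 by linarith
  have ab: "?K * norm A \<le> b" unfolding b_def using K1 by (simp add: mult_left_mono)
  have "norm (Lk A X (Suc k)) \<le> norm (X ** pw A k) + norm (A ** Lk A X k)"
    by (simp add: norm_triangle_ineq)
  also have "\<dots> \<le> ?K * norm X * norm (pw A k) + ?K * norm A * norm (Lk A X k)"
    by (intro add_mono mmn)
  also have "\<dots> \<le> ?K * norm X * (?c * (?K * norm A) ^ k) + b * (?c * real k * b ^ k * norm X)"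
    using K1 ab b1 by (intro add_mono mult_left_mono mult_mono Suc pw_bound) auto
  also have "\<dots> \<le> b * norm X * (?c * b ^ k) + b * (?c * real k * b ^ k * norm X)"
    using K1 Kb ab c1 b1 by (intro add_mono mult_mono power_mono order.refl) auto
  also have "\<dots> = ?c * real (Suc k) * b ^ Suc k * norm X" by (simp add: algebra_simps)
  finally show ?case .
qed

lemma R_bound:
  fixes A X :: "complex^'m::finite^'m"
  defines "b \<equiv> K0 TYPE('m) * (norm A + norm X + 1)"
  shows "norm (pw (A+X) k - pw A k - Lk A X k) \<le> c0 TYPE('m) * (real k)^2 * b ^ k * (norm X)^2"
proof (induction k)
  case 0 show ?case by simp
next
  case (Suc k)
  let ?K = "K0 TYPE('m)" and ?c = "c0 TYPE('m)"
  let ?R = "pw (A+X) k - pw A k - Lk A X k"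
  have K1: "?K \<ge> 1" by (rule K0_ge1)
  have c1: "?c \<ge> 1" by (rule c0_ge1)
  have Kb: "?K \<le> b" unfolding b_def using K1 by (simp add: mult_le_cancel_left1)
  have axb: "?K * norm (A + X) \<le> b" unfolding b_def using K1
    by (intro mult_left_mono) (auto intro: order_trans[OF norm_triangle_ineq])
  have L: "norm (Lk A X k) \<le> ?c * real k * b ^ k * norm X" unfolding b_def by (rule Lk_bound)
  have "norm (pw (A+X) (Suc k) - pw A (Suc k) - Lk A X (Suc k)) \<le> norm ((A + X) ** ?R) + norm (X ** Lk A X k)"
    unfolding R_rec by (rule norm_triangle_ineq)
  also have "\<dots> \<le> ?K * norm (A + X) * norm ?R + ?K * norm X * norm (Lk A X k)"
    by (intro add_mono mmn)
  also have "\<dots> \<le> b * (?c * (real k)^2 * b ^ k * (norm X)^2) + (b * norm X) * (?c * real k * b ^ k * norm X)"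
    using K1 Kb axb by (intro add_mono mult_mono Suc L) auto
  also have "\<dots> = ?c * ((real k)^2 + real k) * b ^ Suc k * (norm X)^2"
    by (simp add: algebra_simps power2_eq_square)
  also have "\<dots> \<le> ?c * (real (Suc k))^2 * b ^ Suc k * (norm X)^2"
    using c1 Kb K1 by (intro mult_right_mono mult_left_mono) (auto simp: power2_eq_square algebra_simps)
  finally show ?case .
qed



lemma cs_mm_left: "cscale c (X::complex^'m::finite^'m) ** Y = cscale c (X ** (Y::complex^'m^'m))"
  by (simp add: cscale_def matrix_matrix_mult_def vec_eq_iff sum_distrib_left mult.assoc)
lemma cs_mm_right: "(X::complex^'m::finite^'m) ** cscale c Y = cscale c (X ** (Y::complex^'m^'m))"
  by (simp add: cscale_def matrix_matrix_mult_def vec_eq_iff sum_distrib_left mult.left_commute)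
lemma cs_cs: "cscale c (cscale d X) = cscale (c * d) X"
  by (simp add: cscale_def vec_eq_iff mult.assoc)
lemma cs_one[simp]: "cscale 1 X = X" by (simp add: cscale_def vec_eq_iff)
lemma cs_zero[simp]: "cscale 0 X = 0" by (simp add: cscale_def vec_eq_iff)
lemma cs_zero2[simp]: "cscale c 0 = 0" by (simp add: cscale_def vec_eq_iff)
lemma cs_add: "cscale (c + d) X = cscale c X + cscale d X"
  by (simp add: cscale_def vec_eq_iff distrib_right)
lemma cs_sum: "cscale c (sum f S) = (\<Sum>i\<in>S. cscale c (f i))"
  by (simp add: cscale_def vec_eq_iff sum_distrib_left)
lemma cplx_scaleR: "r *\<^sub>R (z::complex) = of_real r * z" by (rule scaleR_conv_of_real)

lemma cs_scaleR: "r *\<^sub>R cscale c X = cscale (of_real r * c) X"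
  by (simp add: cscale_def vec_eq_iff cplx_scaleR mult.assoc)

lemmas sumL = bounded_bilinear.sum_left[OF mm_bilinear]
lemmas sumR = bounded_bilinear.sum_right[OF mm_bilinear]

definition Fd :: "nat \<Rightarrow> (nat \<Rightarrow> complex^'m::finite^'m) \<Rightarrow> (nat \<Rightarrow> complex) \<Rightarrow> complex^'m^'m" where
  "Fd n P c = (\<Sum>i<n. cscale (c i) (P i))"

definition gs :: "nat \<Rightarrow> (nat \<Rightarrow> nat \<Rightarrow> complex) \<Rightarrow> (nat \<Rightarrow> complex^'m::finite^'m) \<Rightarrow> complex^'m^'m \<Rightarrow> complex^'m^'m" where
  "gs n g P X = (\<Sum>j<n. \<Sum>l<n. cscale (g j l) (P j ** X ** P l))"

lemma gs_cong: "(\<And>j l. j < n \<Longrightarrow> l < n \<Longrightarrow> g j l = h j l) \<Longrightarrow> gs n g P X = gs n h P X"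
  unfolding gs_def by (intro sum.cong refl) auto

lemma gs_add: "gs n g P X + gs n h P X = gs n (\<lambda>j l. g j l + h j l) P X"
  by (simp add: gs_def sum.distrib[symmetric] cs_add)

lemma gs_scaleR: "r *\<^sub>R gs n g P X = gs n (\<lambda>j l. of_real r * g j l) P X"
  by (simp add: gs_def scaleR_sum_right cs_scaleR)

lemma gs_sums:
  assumes "\<And>j l. j < n \<Longrightarrow> l < n \<Longrightarrow> (\<lambda>k. f k j l) sums s j l"
  shows "(\<lambda>k. gs n (f k) P X) sums gs n s P X"
  unfolding gs_def
  by (intro sums_sum bounded_linear.sums[OF cscale_lin] assms) auto

lemma Fd_sums:
  assumes "\<And>j. j < n \<Longrightarrow> (\<lambda>k. f k j) sums s j"
  shows "(\<lambda>k. Fd n P (f k)) sums Fd n P s"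
  unfolding Fd_def
  by (intro sums_sum bounded_linear.sums[OF cscale_lin] assms) auto

lemma Fd_scaleR: "r *\<^sub>R Fd n P c = Fd n P (\<lambda>j. of_real r * c j)"
  by (simp add: Fd_def scaleR_sum_right cs_scaleR)

lemma gs_norm:
  "norm (gs n g P (X::complex^'m::finite^'m))
     \<le> (\<Sum>j<n. \<Sum>l<n. cmod (g j l) * (K0 TYPE('m) * norm (P j)) * (K0 TYPE('m) * norm (P l))) * norm X"
proof -
  have "norm (gs n g P X) \<le> (\<Sum>j<n. \<Sum>l<n. norm (cscale (g j l) (P j ** X ** P l)))"
    unfolding gs_def by (intro order_trans[OF norm_sum] sum_mono norm_sum)
  also have "\<dots> \<le> (\<Sum>j<n. \<Sum>l<n. cmod (g j l) * (K0 TYPE('m) * norm (P j)) * (K0 TYPE('m) * norm (P l)) * norm X)"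
  proof (intro sum_mono)
    fix j l
    have "norm (P j ** X ** P l) \<le> K0 TYPE('m) * norm (P j ** X) * norm (P l)" by (rule mmn)
    also have "\<dots> \<le> K0 TYPE('m) * (K0 TYPE('m) * norm (P j) * norm X) * norm (P l)"
      using K0_ge1[where 'm='m] by (intro mult_right_mono mult_left_mono mmn) auto
    finally have "norm (P j ** X ** P l) \<le> K0 TYPE('m) * norm (P j) * (K0 TYPE('m) * norm (P l)) * norm X"
      by (simp add: ac_simps)
    then show "norm (cscale (g j l) (P j ** X ** P l)) \<le> cmod (g j l) * (K0 TYPE('m) * norm (P j)) * (K0 TYPE('m) * norm (P l)) * norm X"
      by (simp add: cscale_norm mult_left_mono mult.assoc)
  qed
  also have "\<dots> = (\<Sum>j<n. \<Sum>l<n. cmod (g j l) * (K0 TYPE('m) * norm (P j)) * (K0 TYPE('m) * norm (P l))) * norm X"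
    by (simp add: sum_distrib_right)
  finally show ?thesis .
qed

locale spec =
  fixes n :: nat and P :: "nat \<Rightarrow> complex^'m::finite^'m"
  assumes proj: "\<And>i j. i < n \<Longrightarrow> j < n \<Longrightarrow> P i ** P j = (if i = j then P i else 0)"
    and complete: "(\<Sum>j<n. P j) = mat 1"
begin

lemma PF: "j < n \<Longrightarrow> P j ** Fd n P c = cscale (c j) (P j)"
proof -
  assume j: "j < n"
  have "P j ** Fd n P c = (\<Sum>i<n. cscale (c i) (P j ** P i))"
    by (simp add: Fd_def sumR cs_mm_right)
  also have "\<dots> = (\<Sum>i<n. if i = j then cscale (c j) (P j) else 0)"
    by (rule sum.cong) (auto simp: proj j)
  also have "\<dots> = cscale (c j) (P j)" using j by simp
  finally show ?thesis .
qed

lemma FP: "j < n \<Longrightarrow> Fd n P c ** P j = cscale (c j) (P j)"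
proof -
  assume j: "j < n"
  have "Fd n P c ** P j = (\<Sum>i<n. cscale (c i) (P i ** P j))"
    by (simp add: Fd_def sumL cs_mm_left)
  also have "\<dots> = (\<Sum>i<n. if i = j then cscale (c j) (P j) else 0)"
    by (rule sum.cong) (auto simp: proj j)
  also have "\<dots> = cscale (c j) (P j)" using j by simp
  finally show ?thesis .
qed

lemma F_mult: "Fd n P c ** Fd n P d = Fd n P (\<lambda>i. c i * d i)"
proof -
  have "Fd n P c ** Fd n P d = (\<Sum>i<n. cscale (d i) (Fd n P c ** P i))"
    by (simp add: Fd_def[of n P d] sumR cs_mm_right)
  also have "\<dots> = (\<Sum>i<n. cscale (c i * d i) (P i))"
    by (rule sum.cong) (auto simp: FP cs_cs mult.commute)
  finally show ?thesis by (simp add: Fd_def)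
qed

lemma F_one: "Fd n P (\<lambda>_. 1) = mat 1"
  by (simp add: Fd_def complete)

lemma Pj_def: "j < n \<Longrightarrow> P j = Fd n P (\<lambda>i. if i = j then 1 else 0)"
proof -
  assume j: "j < n"
  have "(\<Sum>i<n. cscale (if i = j then 1 else 0) (P i)) = (\<Sum>i<n. if i = j then P i else 0)"
    by (rule sum.cong) auto
  also have "\<dots> = P j" using j by simp
  finally show ?thesis by (simp add: Fd_def)
qed

lemma F_gs: "Fd n P c ** gs n g P X = gs n (\<lambda>j l. c j * g j l) P X"
proof -
  have "Fd n P c ** gs n g P X = (\<Sum>j<n. \<Sum>l<n. cscale (g j l) ((Fd n P c ** P j) ** X ** P l))"
    by (simp add: gs_def sumR cs_mm_right matrix_mul_assoc)
  also have "\<dots> = gs n (\<lambda>j l. c j * g j l) P X"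
    unfolding gs_def
    by (intro sum.cong refl) (simp add: FP cs_mm_left cs_cs mult.commute)
  finally show ?thesis .
qed

lemma gs_F: "gs n g P X ** Fd n P c = gs n (\<lambda>j l. g j l * c l) P X"
proof -
  have "gs n g P X ** Fd n P c = (\<Sum>j<n. \<Sum>l<n. cscale (g j l) (P j ** X ** (P l ** Fd n P c)))"
    by (simp add: gs_def sumL cs_mm_left matrix_mul_assoc)
  also have "\<dots> = gs n (\<lambda>j l. g j l * c l) P X"
    unfolding gs_def
    by (intro sum.cong refl) (simp add: PF cs_mm_right cs_cs mult.commute)
  finally show ?thesis .
qed

lemma gs_one: "gs n (\<lambda>_ _. 1) P X = X"
proof -
  have "gs n (\<lambda>_ _. 1) P X = (\<Sum>j<n. P j) ** X ** (\<Sum>l<n. P l)"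
    apply (simp add: gs_def sumL sumR)
    apply (rule sum.swap)
    done
  then show ?thesis by (simp add: complete)
qed

lemma gs_Fd_one: "gs n g P X = Fd n P (\<lambda>_. 1) ** gs n g P X"
  by (simp add: F_one)

lemma P_gs_P: "j < n \<Longrightarrow> l < n \<Longrightarrow> P j ** gs n h P X ** P l = cscale (h j l) (P j ** X ** P l)"
proof -
  assume j: "j < n" and l: "l < n"
  have e1: "Fd n P (\<lambda>i. if i = j then 1 else 0) = P j" by (rule Pj_def[OF j, symmetric])
  have e2: "Fd n P (\<lambda>i. if i = l then 1 else 0) = P l" by (rule Pj_def[OF l, symmetric])
  have "P j ** gs n h P X ** P l
     = Fd n P (\<lambda>i. if i = j then 1 else 0) ** gs n h P X ** Fd n P (\<lambda>i. if i = l then 1 else 0)"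
    by (simp only: e1 e2)
  also have "\<dots> = gs n (\<lambda>j' l'. ((if j' = j then 1 else 0) * h j' l') * (if l' = l then 1 else 0)) P X"
    by (simp only: F_gs gs_F)
  also have "\<dots> = (\<Sum>j'<n. \<Sum>l'<n. if l' = l then (if j' = j then cscale (h j l) (P j ** X ** P l) else 0) else 0)"
    unfolding gs_def by (intro sum.cong refl) auto
  also have "\<dots> = cscale (h j l) (P j ** X ** P l)" using j l by simp
  finally show ?thesis .
qed

lemma gs_gs: "gs n g P (gs n h P X) = gs n (\<lambda>j l. g j l * h j l) P X"
proof -
  have "gs n g P (gs n h P X) = (\<Sum>j<n. \<Sum>l<n. cscale (g j l) (P j ** gs n h P X ** P l))"
    by (rule gs_def)
  also have "\<dots> = gs n (\<lambda>j l. g j l * h j l) P X"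
    unfolding gs_def[of n "\<lambda>j l. g j l * h j l"]
    by (intro sum.cong refl) (simp add: P_gs_P cs_cs)
  finally show ?thesis .
qed

end



fun sq :: "nat \<Rightarrow> complex \<Rightarrow> complex \<Rightarrow> complex" where
  "sq 0 u v = 0"
| "sq (Suc k) u v = v ^ k + u * sq k u v"

definition Ef :: "complex \<Rightarrow> complex \<Rightarrow> complex" where
  "Ef u v = (if u = v then exp v else (exp u - exp v) / (u - v))"

lemma sq_diff: "(u - v) * sq k u v = u ^ k - v ^ k"
proof (induction k)
  case 0 then show ?case by simp
next
  case (Suc k)
  have "(u - v) * sq (Suc k) u v = (u - v) * v ^ k + u * ((u - v) * sq k u v)"
    by (simp add: algebra_simps)
  also have "\<dots> = (u - v) * v ^ k + u * (u ^ k - v ^ k)" by (simp only: Suc)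
  also have "\<dots> = u ^ Suc k - v ^ Suc k" by (simp add: algebra_simps)
  finally show ?case .
qed

lemma sq_same: "sq (Suc k) u u = of_nat (Suc k) * u ^ k"
  by (induction k) (simp_all add: algebra_simps)

lemma exp_sums': "(\<lambda>k. u ^ k / fact k) sums exp (u::complex)"
proof -
  have "(\<lambda>k. u ^ k /\<^sub>R fact k) = (\<lambda>k. u ^ k / fact k)"
    by (rule ext) (simp add: scaleR_conv_of_real divide_inverse mult.commute)
  then show ?thesis using exp_converges[of u] by simp
qed

lemma sq_sums: "(\<lambda>k. sq k u v / fact k) sums Ef u v"
proof (cases "u = v")
  case True
  have "(\<lambda>k. sq (Suc k) u v / fact (Suc k)) = (\<lambda>k. u ^ k / fact k)"
    by (rule ext) (simp add: True sq_same fact_Suc del: sq.simps of_nat_Suc)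
  then have "(\<lambda>k. sq (Suc k) u v / fact (Suc k)) sums Ef u v"
    using exp_sums'[of u] by (simp add: Ef_def True)
  then show ?thesis by (subst (asm) sums_Suc_iff) simp
next
  case False
  have "(\<lambda>k. (u ^ k / fact k - v ^ k / fact k) / (u - v)) sums ((exp u - exp v) / (u - v))"
    by (intro sums_divide sums_diff exp_sums')
  moreover have "(\<lambda>k. (u ^ k / fact k - v ^ k / fact k) / (u - v)) = (\<lambda>k. sq k u v / fact k)"
  proof (rule ext)
    fix k
    have "sq k u v = (u ^ k - v ^ k) / (u - v)" using sq_diff[of u v k] False
      by (simp add: field_simps)
    then show "(u ^ k / fact k - v ^ k / fact k) / (u - v) = sq k u v / fact k"
      by (simp add: field_simps)
  qed
  ultimately show ?thesis by (simp add: Ef_def False)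
qed

lemma exp_sums2: "(\<lambda>k. inverse (fact k) * u ^ k) sums exp (u::complex)"
proof -
  have "(\<lambda>k. inverse (fact k) * u ^ k) = (\<lambda>k. u ^ k / fact k)"
    by (rule ext) (simp add: divide_inverse mult.commute)
  then show ?thesis using exp_sums'[of u] by simp
qed

lemma sq_sums2: "(\<lambda>k. inverse (fact k) * sq k u v) sums Ef u v"
proof -
  have "(\<lambda>k. inverse (fact k) * sq k u v) = (\<lambda>k. sq k u v / fact k)"
    by (rule ext) (simp add: divide_inverse mult.commute)
  then show ?thesis using sq_sums[of u v] by simp
qed

lemma sq_four: "real k ^ 2 \<le> 4 ^ k"
proof -
  have "real k \<le> 2 ^ k" using of_nat_less_two_power[of k, where 'a=real] by linarith
  then have "real k ^ 2 \<le> (2 ^ k) ^ 2" by (intro power_mono) auto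
  also have "(2 ^ k) ^ 2 = (4::real) ^ k" by (simp add: power2_eq_square power_mult_distrib[symmetric])
  finally show ?thesis .
qed

locale spec2 = spec n P for n :: nat and P :: "nat \<Rightarrow> complex^'m::finite^'m" +
  fixes a :: "nat \<Rightarrow> complex"
begin

lemma pw_F: "pw (Fd n P a) k = Fd n P (\<lambda>i. a i ^ k)"
  by (induction k) (simp_all add: F_one F_mult)

lemma Lk_gs: "Lk (Fd n P a) X k = gs n (\<lambda>j l. sq k (a j) (a l)) P X"
proof (induction k)
  case 0 then show ?case by (simp add: gs_def)
next
  case (Suc k)
  have 1: "gs n (\<lambda>_ _. 1) P X ** Fd n P (\<lambda>i. a i ^ k) = gs n (\<lambda>j l. a l ^ k) P X"
    by (simp add: gs_F)
  have 2: "X ** pw (Fd n P a) k = gs n (\<lambda>j l. a l ^ k) P X"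
    using 1 by (simp add: gs_one pw_F)
  show ?case by (simp add: Suc 2 F_gs gs_add)
qed

lemma mexpA: "mexp (Fd n P a) = Fd n P (\<lambda>i. exp (a i))"
proof -
  have "(\<lambda>k. Fd n P (\<lambda>i. of_real (1 / fact k) * a i ^ k)) sums Fd n P (\<lambda>i. exp (a i))"
    by (rule Fd_sums) (simp add: exp_sums2 exp_sums')
  then have "(\<lambda>k. (1 / fact k) *\<^sub>R pw (Fd n P a) k) sums Fd n P (\<lambda>i. exp (a i))"
    by (simp add: pw_F Fd_scaleR)
  then show ?thesis using mexp_sums sums_unique2 by blast
qed

lemma Lk_sums: "(\<lambda>k. (1 / fact k) *\<^sub>R Lk (Fd n P a) X k) sums gs n (\<lambda>j l. Ef (a j) (a l)) P X"
proof -
  have "(\<lambda>k. gs n (\<lambda>j l. of_real (1 / fact k) * sq k (a j) (a l)) P X) sums gs n (\<lambda>j l. Ef (a j) (a l)) P X"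
    by (rule gs_sums) (simp add: sq_sums2 sq_sums)
  then show ?thesis by (simp add: Lk_gs gs_scaleR)
qed

lemma key: "\<exists>C\<ge>0. \<forall>X. norm X \<le> 1 \<longrightarrow>
   norm (mexp (Fd n P a + X) - mexp (Fd n P a) - gs n (\<lambda>j l. Ef (a j) (a l)) P X) \<le> C * (norm X)^2"
proof -
  define A where "A = Fd n P a"
  let ?K = "K0 TYPE('m)" and ?c = "c0 TYPE('m)"
  define b0 where "b0 = ?K * (norm A + 2)"
  define h where "h k = real k ^ 2 * b0 ^ k / fact k" for k
  have b0: "b0 \<ge> 0" unfolding b0_def using K0_ge1[where 'm='m] by simp
  have h0: "h k \<ge> 0" for k unfolding h_def using b0 by simp
  have sh: "summable h"
  proof (rule summable_comparison_test')
    show "summable (\<lambda>k. inverse (fact k) * (4 * b0) ^ k)" by (rule summable_exp)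
    fix k :: nat
    have "real k ^ 2 * b0 ^ k \<le> 4 ^ k * b0 ^ k" using b0 sq_four by (intro mult_right_mono) auto
    then show "norm (h k) \<le> inverse (fact k) * (4 * b0) ^ k"
      using h0[of k] by (simp add: h_def power_mult_distrib divide_inverse mult.commute mult_left_mono)
  qed
  define C where "C = ?c * suminf h"
  have C0: "C \<ge> 0" unfolding C_def using c0_ge1[where 'm='m] h0 sh
    by (simp add: suminf_nonneg)
  have "norm (mexp (A + X) - mexp A - gs n (\<lambda>j l. Ef (a j) (a l)) P X) \<le> C * (norm X)^2"
    if X: "norm X \<le> 1" for X
  proof -
    define G where "G = gs n (\<lambda>j l. Ef (a j) (a l)) P X"
    define R where "R k = pw (A+X) k - pw A k - Lk A X k" for k
    have "(\<lambda>k. (1 / fact k) *\<^sub>R pw (A+X) k - (1 / fact k) *\<^sub>R pw A k - (1 / fact k) *\<^sub>R Lk A X k)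
           sums (mexp (A + X) - mexp A - G)"
      unfolding G_def A_def by (intro sums_diff mexp_sums Lk_sums)
    then have S: "(\<lambda>k. (1 / fact k) *\<^sub>R R k) sums (mexp (A + X) - mexp A - G)"
      by (simp add: R_def scaleR_diff_right)
    define b where "b = ?K * (norm A + norm X + 1)"
    have bb: "b \<le> b0" unfolding b_def b0_def using X K0_ge1[where 'm='m] by (intro mult_left_mono) auto
    have b0': "0 \<le> b" unfolding b_def using K0_ge1[where 'm='m] by simp
    have bnd: "norm ((1 / fact k) *\<^sub>R R k) \<le> (?c * (norm X)^2) * h k" for k
    proof -
      have "norm ((1 / fact k) *\<^sub>R R k) = (1 / fact k) * norm (R k)" by simp
      also have "\<dots> \<le> (1 / fact k) * (?c * (real k)^2 * b ^ k * (norm X)^2)"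
        unfolding R_def b_def by (intro mult_left_mono R_bound) auto
      also have "\<dots> \<le> (1 / fact k) * (?c * (real k)^2 * b0 ^ k * (norm X)^2)"
        using c0_ge1[where 'm='m] b0' bb
        by (intro mult_left_mono mult_right_mono power_mono) auto
      also have "\<dots> = (?c * (norm X)^2) * h k" by (simp add: h_def)
      finally show ?thesis .
    qed
    have "norm (mexp (A + X) - mexp A - G) = norm (\<Sum>k. (1 / fact k) *\<^sub>R R k)"
      using S by (simp add: sums_unique[symmetric])
    also have "\<dots> \<le> (\<Sum>k. (?c * (norm X)^2) * h k)"
      by (intro norm_suminf_le bnd summable_mult sh)
    also have "\<dots> = C * (norm X)^2" using sh by (simp add: suminf_mult C_def)
    finally show ?thesis unfolding G_def .
  qed
  then show ?thesis using C0 unfolding A_def by blast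
qed

end



lemma bigO_sqI: "\<delta> > 0 \<Longrightarrow> (\<And>B. norm B < \<delta> \<Longrightarrow> norm (f B) \<le> C * (norm B)^2) \<Longrightarrow> bigO_sq f"
  unfolding bigO_sq_def by blast

lemma small:
  fixes K :: real and B :: "'a::real_normed_vector"
  assumes K: "K \<ge> 0" and B: "norm B < 1 / (K + 1)"
  shows "norm B \<le> 1" "K * norm B \<le> 1"
proof -
  have "(K + 1) * norm B \<le> 1" using B K by (simp add: field_simps)
  moreover have "0 \<le> K * norm B" using K by simp
  moreover have "0 \<le> norm B" by simp
  ultimately have "norm B + K * norm B \<le> 1" "0 \<le> K * norm B" "0 \<le> norm B"
    by (simp_all add: algebra_simps)
  then show "norm B \<le> 1" "K * norm B \<le> 1" by linarith+
qed

lemma sqb: "norm Y \<le> K * norm B \<Longrightarrow> (norm Y)^2 \<le> K^2 * (norm B)^2"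
proof -
  assume h: "norm Y \<le> K * norm B"
  then have "(norm Y)^2 \<le> (K * norm B)^2" by (intro power_mono) auto
  then show ?thesis by (simp add: power_mult_distrib)
qed

lemma case1:
  fixes A :: "complex^'m::finite^'m"
  assumes C00: "C0 \<ge> 0" and C10: "C1 \<ge> 0" and K: "K \<ge> 0"
    and E0: "\<forall>X::complex^'m^'m. norm X \<le> 1 \<longrightarrow> norm (mexp X - mat 1 - X) \<le> C0 * (norm X)^2"
    and E1: "\<forall>X. norm X \<le> 1 \<longrightarrow> norm (mexp (A + X) - mexp A - T X ** mexp A) \<le> C1 * (norm X)^2"
    and TK: "\<forall>X. norm (T X) \<le> K * norm X"
  shows "bigO_sq (\<lambda>B. mexp (A + B) - mexp (T B) ** mexp A)"
proof (rule bigO_sqI)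
  show "1 / (K + 1) > 0" using K by simp
  fix B :: "complex^'m^'m" assume B: "norm B < 1 / (K + 1)"
  note s = small[OF K B]
  have TB: "norm (T B) \<le> 1" using TK s(2) order_trans by blast
  have id: "mexp (A + B) - mexp (T B) ** mexp A
     = (mexp (A + B) - mexp A - T B ** mexp A) - (mexp (T B) - mat 1 - T B) ** mexp A"
    by (simp add: bl algebra_simps)
  have "norm (mexp (A + B) - mexp (T B) ** mexp A)
     \<le> norm (mexp (A + B) - mexp A - T B ** mexp A) + norm ((mexp (T B) - mat 1 - T B) ** mexp A)"
    unfolding id by (rule norm_triangle_ineq4)
  also have "\<dots> \<le> C1 * (norm B)^2 + K0 TYPE('m) * (C0 * (norm (T B))^2) * norm (mexp A)"
    using E1[rule_format, OF s(1)] E0[rule_format, OF TB] K0_ge1[where 'm='m]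
    by (intro add_mono order_trans[OF mmn] mult_right_mono mult_left_mono) auto
  also have "\<dots> \<le> C1 * (norm B)^2 + K0 TYPE('m) * (C0 * (K^2 * (norm B)^2)) * norm (mexp A)"
    using C00 K0_ge1[where 'm='m] sqb[OF TK[rule_format]]
    by (intro add_mono order.refl mult_right_mono mult_left_mono) auto
  also have "\<dots> = (C1 + K0 TYPE('m) * C0 * K^2 * norm (mexp A)) * (norm B)^2"
    by (simp add: algebra_simps)
  finally show "norm (mexp (A + B) - mexp (T B) ** mexp A) \<le> (C1 + K0 TYPE('m) * C0 * K^2 * norm (mexp A)) * (norm B)^2" .
qed

lemma case2:
  fixes A :: "complex^'m::finite^'m"
  assumes C00: "C0 \<ge> 0" and C10: "C1 \<ge> 0" and K: "K \<ge> 0"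
    and E0: "\<forall>X::complex^'m^'m. norm X \<le> 1 \<longrightarrow> norm (mexp X - mat 1 - X) \<le> C0 * (norm X)^2"
    and E1: "\<forall>X. norm X \<le> 1 \<longrightarrow> norm (mexp (A + X) - mexp A - mexp A ** T X) \<le> C1 * (norm X)^2"
    and TK: "\<forall>X. norm (T X) \<le> K * norm X"
  shows "bigO_sq (\<lambda>B. mexp (A + B) - mexp A ** mexp (T B))"
proof (rule bigO_sqI)
  show "1 / (K + 1) > 0" using K by simp
  fix B :: "complex^'m^'m" assume B: "norm B < 1 / (K + 1)"
  note s = small[OF K B]
  have TB: "norm (T B) \<le> 1" using TK s(2) order_trans by blast
  have id: "mexp (A + B) - mexp A ** mexp (T B)
     = (mexp (A + B) - mexp A - mexp A ** T B) - mexp A ** (mexp (T B) - mat 1 - T B)"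
    by (simp add: bl algebra_simps)
  have "norm (mexp (A + B) - mexp A ** mexp (T B))
     \<le> norm (mexp (A + B) - mexp A - mexp A ** T B) + norm (mexp A ** (mexp (T B) - mat 1 - T B))"
    unfolding id by (rule norm_triangle_ineq4)
  also have "\<dots> \<le> C1 * (norm B)^2 + K0 TYPE('m) * norm (mexp A) * (C0 * (norm (T B))^2)"
    using E1[rule_format, OF s(1)] E0[rule_format, OF TB] K0_ge1[where 'm='m]
    by (intro add_mono order_trans[OF mmn] mult_right_mono mult_left_mono) auto
  also have "\<dots> \<le> C1 * (norm B)^2 + K0 TYPE('m) * norm (mexp A) * (C0 * (K^2 * (norm B)^2))"
    using C00 K0_ge1[where 'm='m] sqb[OF TK[rule_format]]
    by (intro add_mono order.refl mult_right_mono mult_left_mono mult_nonneg_nonneg) auto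
  also have "\<dots> = (C1 + K0 TYPE('m) * C0 * K^2 * norm (mexp A)) * (norm B)^2"
    by (simp add: algebra_simps)
  finally show "norm (mexp (A + B) - mexp A ** mexp (T B)) \<le> (C1 + K0 TYPE('m) * C0 * K^2 * norm (mexp A)) * (norm B)^2" .
qed

lemma case3:
  fixes A :: "complex^'m::finite^'m"
  assumes C00: "C0 \<ge> 0" and C10: "C1 \<ge> 0" and K: "K \<ge> 0"
    and E0: "\<forall>X::complex^'m^'m. norm X \<le> 1 \<longrightarrow> norm (mexp X - mat 1 - X) \<le> C0 * (norm X)^2"
    and E1: "\<forall>X. norm X \<le> 1 \<longrightarrow> norm (mexp (A + X) - mexp A - G X) \<le> C1 * (norm X)^2"
    and TK: "\<forall>X. norm (T X) \<le> K * norm X"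
    and GT: "\<forall>X. G (T X) = X ** mexp A"
  shows "bigO_sq (\<lambda>B. mexp B ** mexp A - mexp (A + T B))"
proof (rule bigO_sqI)
  show "1 / (K + 1) > 0" using K by simp
  fix B :: "complex^'m^'m" assume B: "norm B < 1 / (K + 1)"
  note s = small[OF K B]
  have TB: "norm (T B) \<le> 1" using TK s(2) order_trans by blast
  have id: "mexp B ** mexp A - mexp (A + T B)
     = (mexp B - mat 1 - B) ** mexp A - (mexp (A + T B) - mexp A - G (T B))"
    by (simp add: GT bl algebra_simps)
  have "norm (mexp B ** mexp A - mexp (A + T B))
     \<le> norm ((mexp B - mat 1 - B) ** mexp A) + norm (mexp (A + T B) - mexp A - G (T B))"
    unfolding id by (rule norm_triangle_ineq4)
  also have "\<dots> \<le> K0 TYPE('m) * (C0 * (norm B)^2) * norm (mexp A) + C1 * (norm (T B))^2"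
    using E1[rule_format, OF TB] E0[rule_format, OF s(1)] K0_ge1[where 'm='m]
    by (intro add_mono order_trans[OF mmn] mult_right_mono mult_left_mono) auto
  also have "\<dots> \<le> K0 TYPE('m) * (C0 * (norm B)^2) * norm (mexp A) + C1 * (K^2 * (norm B)^2)"
    using C10 sqb[OF TK[rule_format]] by (intro add_mono order.refl mult_left_mono) auto
  also have "\<dots> = (C1 * K^2 + K0 TYPE('m) * C0 * norm (mexp A)) * (norm B)^2"
    by (simp add: algebra_simps)
  finally show "norm (mexp B ** mexp A - mexp (A + T B)) \<le> (C1 * K^2 + K0 TYPE('m) * C0 * norm (mexp A)) * (norm B)^2" .
qed

lemma case4:
  fixes A :: "complex^'m::finite^'m"
  assumes C00: "C0 \<ge> 0" and C10: "C1 \<ge> 0" and K: "K \<ge> 0"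
    and E0: "\<forall>X::complex^'m^'m. norm X \<le> 1 \<longrightarrow> norm (mexp X - mat 1 - X) \<le> C0 * (norm X)^2"
    and E1: "\<forall>X. norm X \<le> 1 \<longrightarrow> norm (mexp (A + X) - mexp A - G X) \<le> C1 * (norm X)^2"
    and TK: "\<forall>X. norm (T X) \<le> K * norm X"
    and GT: "\<forall>X. G (T X) = mexp A ** X"
  shows "bigO_sq (\<lambda>B. mexp A ** mexp B - mexp (A + T B))"
proof (rule bigO_sqI)
  show "1 / (K + 1) > 0" using K by simp
  fix B :: "complex^'m^'m" assume B: "norm B < 1 / (K + 1)"
  note s = small[OF K B]
  have TB: "norm (T B) \<le> 1" using TK s(2) order_trans by blast
  have id: "mexp A ** mexp B - mexp (A + T B)
     = mexp A ** (mexp B - mat 1 - B) - (mexp (A + T B) - mexp A - G (T B))"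
    by (simp add: GT bl algebra_simps)
  have "norm (mexp A ** mexp B - mexp (A + T B))
     \<le> norm (mexp A ** (mexp B - mat 1 - B)) + norm (mexp (A + T B) - mexp A - G (T B))"
    unfolding id by (rule norm_triangle_ineq4)
  also have "\<dots> \<le> K0 TYPE('m) * norm (mexp A) * (C0 * (norm B)^2) + C1 * (norm (T B))^2"
    using E1[rule_format, OF TB] E0[rule_format, OF s(1)] K0_ge1[where 'm='m]
    by (intro add_mono order_trans[OF mmn] mult_right_mono mult_left_mono mult_nonneg_nonneg) auto
  also have "\<dots> \<le> K0 TYPE('m) * norm (mexp A) * (C0 * (norm B)^2) + C1 * (K^2 * (norm B)^2)"
    using C10 sqb[OF TK[rule_format]] by (intro add_mono order.refl mult_left_mono) auto
  also have "\<dots> = (C1 * K^2 + K0 TYPE('m) * C0 * norm (mexp A)) * (norm B)^2"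
    by (simp add: algebra_simps)
  finally show "norm (mexp A ** mexp B - mexp (A + T B)) \<le> (C1 * K^2 + K0 TYPE('m) * C0 * norm (mexp A)) * (norm B)^2" .
qed

lemma gs_lin: "\<exists>K\<ge>0. \<forall>X. norm (gs n g P (X::complex^'m::finite^'m)) \<le> K * norm X"
proof (intro exI conjI allI)
  show "0 \<le> (\<Sum>j<n. \<Sum>l<n. cmod (g j l) * (K0 TYPE('m) * norm (P j)) * (K0 TYPE('m) * norm (P l)))"
    using K0_ge1[where 'm='m] by (intro sum_nonneg mult_nonneg_nonneg) auto
qed (rule gs_norm)

lemma E0:
  "\<exists>C\<ge>0. \<forall>X::complex^'m::finite^'m. norm X \<le> 1 \<longrightarrow> norm (mexp X - mat 1 - X) \<le> C * (norm X)^2"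
proof -
  interpret z: spec2 1 "\<lambda>_. mat 1 :: complex^'m^'m" "\<lambda>_. 0"
    by unfold_locales simp_all
  have F0: "Fd 1 (\<lambda>_. mat 1 :: complex^'m^'m) (\<lambda>_. 0) = 0" by (simp add: Fd_def)
  have M0: "mexp (0::complex^'m^'m) = mat 1" using z.mexpA by (simp add: Fd_def F0)
  have G: "gs 1 (\<lambda>j l. Ef 0 0) (\<lambda>_. mat 1) X = X" for X :: "complex^'m^'m"
    by (simp add: gs_def Ef_def)
  have "\<exists>C\<ge>0. \<forall>X. norm X \<le> 1 \<longrightarrow> norm (mexp (Fd 1 (\<lambda>_. mat 1 :: complex^'m^'m) (\<lambda>_. 0) + X)
      - mexp (Fd 1 (\<lambda>_. mat 1 :: complex^'m^'m) (\<lambda>_. 0)) - gs 1 (\<lambda>j l. Ef 0 0) (\<lambda>_. mat 1) X) \<le> C * (norm X)^2"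
    by (rule z.key)
  then show ?thesis unfolding F0 M0 G by simp
qed



theorem theorem1:
  fixes A :: "complex^'m::finite^'m" and n :: nat
    and a :: "nat \<Rightarrow> complex" and P :: "nat \<Rightarrow> complex^'m^'m"
  assumes distinct: "inj_on a {..<n}"
    and nonzero: "\<And>j. j < n \<Longrightarrow> P j \<noteq> 0"
    and proj: "\<And>i j. i < n \<Longrightarrow> j < n \<Longrightarrow> P i ** P j = (if i = j then P i else 0)"
    and complete: "(\<Sum>j<n. P j) = mat 1"
    and decomp: "A = (\<Sum>j<n. cscale (a j) (P j))"
  shows "bigO_sq (\<lambda>B. mexp (A + B) - mexp (dcl n a P B) ** mexp A)
         \<and> bigO_sq (\<lambda>B. mexp (A + B) - mexp A ** mexp (dcr n a P B))
         \<and> ((\<forall>j<n. \<forall>k<n. j \<noteq> k \<longrightarrow> exp (a j - a k) \<noteq> 1) \<longrightarrow>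
              bigO_sq (\<lambda>B. mexp B ** mexp A - mexp (A + cml n a P B))
            \<and> bigO_sq (\<lambda>B. mexp A ** mexp B - mexp (A + cmr n a P B)))"
proof -
  interpret s: spec2 n P a by unfold_locales (simp_all add: proj complete)
  have AF: "A = Fd n P a" by (simp add: decomp Fd_def)
  have dcl_gs: "dcl n a P X = gs n (\<lambda>j l. ell a j l) P X" for X by (simp add: dcl_def gs_def)
  have dcr_gs: "dcr n a P X = gs n (\<lambda>j l. ell a l j) P X" for X by (simp add: dcr_def gs_def)
  have cml_gs: "cml n a P X = gs n (\<lambda>j l. 1 / ell a j l) P X" for X by (simp add: cml_def gs_def)
  have cmr_gs: "cmr n a P X = gs n (\<lambda>j l. 1 / ell a l j) P X" for X by (simp add: cmr_def gs_def)
  have neq: "a j \<noteq> a l" if "j < n" "l < n" "j \<noteq> l" for j l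
    using distinct that by (auto dest: inj_onD)
  have El1: "ell a j l * exp (a l) = Ef (a j) (a l)" if "j < n" "l < n" for j l
  proof (cases "j = l")
    case True then show ?thesis by (simp add: ell_def Ef_def)
  next
    case False
    then have d: "a j - a l \<noteq> 0" using neq that by simp
    have "ell a j l * exp (a l) = (exp (a j - a l) * exp (a l) - exp (a l)) / (a j - a l)"
      using False by (simp add: ell_def field_simps)
    also have "\<dots> = (exp (a j) - exp (a l)) / (a j - a l)" by (simp add: exp_diff)
    finally show ?thesis using neq[OF that False] by (simp add: Ef_def)
  qed
  have El2: "exp (a j) * ell a l j = Ef (a j) (a l)" if "j < n" "l < n" for j l
  proof (cases "j = l")
    case True then show ?thesis by (simp add: ell_def Ef_def)
  next
    case False
    then have d: "a l - a j \<noteq> 0" using neq that by simp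
    have "exp (a j) * ell a l j = (exp (a l - a j) * exp (a j) - exp (a j)) / (a l - a j)"
      using False by (simp add: ell_def field_simps)
    also have "\<dots> = (exp (a l) - exp (a j)) / (a l - a j)" by (simp add: exp_diff)
    also have "\<dots> = (exp (a j) - exp (a l)) / (a j - a l)"
    proof -
      have e1: "exp (a l) - exp (a j) = - (exp (a j) - exp (a l))" by simp
      have e2: "a l - a j = - (a j - a l)" by simp
      show ?thesis unfolding e1 e2 by (rule minus_divide_divide)
    qed
    finally show ?thesis using neq[OF that False] by (simp add: Ef_def)
  qed
  define G where "G X = gs n (\<lambda>j l. Ef (a j) (a l)) P X" for X
  have D1: "dcl n a P X ** mexp A = G X" for X
    unfolding AF s.mexpA dcl_gs s.gs_F G_def by (rule gs_cong) (simp add: El1)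
  have D2: "mexp A ** dcr n a P X = G X" for X
    unfolding AF s.mexpA dcr_gs s.F_gs G_def by (rule gs_cong) (simp add: El2)
  obtain C1 where C1: "C1 \<ge> 0" and E1: "\<forall>X. norm X \<le> 1 \<longrightarrow> norm (mexp (A + X) - mexp A - G X) \<le> C1 * (norm X)^2"
    using s.key unfolding AF[symmetric] G_def by blast
  obtain C0 where C0: "C0 \<ge> 0" and E0: "\<forall>X::complex^'m^'m. norm X \<le> 1 \<longrightarrow> norm (mexp X - mat 1 - X) \<le> C0 * (norm X)^2"
    using E0 by blast
  obtain K1 where K1: "K1 \<ge> 0" "\<forall>X. norm (dcl n a P X) \<le> K1 * norm X"
    unfolding dcl_gs using gs_lin by blast
  obtain K2 where K2: "K2 \<ge> 0" "\<forall>X. norm (dcr n a P X) \<le> K2 * norm X"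
    unfolding dcr_gs using gs_lin by blast
  obtain K3 where K3: "K3 \<ge> 0" "\<forall>X. norm (cml n a P X) \<le> K3 * norm X"
    unfolding cml_gs using gs_lin by blast
  obtain K4 where K4: "K4 \<ge> 0" "\<forall>X. norm (cmr n a P X) \<le> K4 * norm X"
    unfolding cmr_gs using gs_lin by blast
  have P1: "bigO_sq (\<lambda>B. mexp (A + B) - mexp (dcl n a P B) ** mexp A)"
    by (rule case1[OF C0 C1 K1(1) E0 _ K1(2)]) (simp add: D1 E1)
  have P2: "bigO_sq (\<lambda>B. mexp (A + B) - mexp A ** mexp (dcr n a P B))"
    by (rule case2[OF C0 C1 K2(1) E0 _ K2(2)]) (simp add: D2 E1)
  have P34: "bigO_sq (\<lambda>B. mexp B ** mexp A - mexp (A + cml n a P B))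
            \<and> bigO_sq (\<lambda>B. mexp A ** mexp B - mexp (A + cmr n a P B))"
    if cond: "\<forall>j<n. \<forall>k<n. j \<noteq> k \<longrightarrow> exp (a j - a k) \<noteq> 1"
  proof -
    have nz: "ell a j l \<noteq> 0" if "j < n" "l < n" for j l
    proof (cases "j = l")
      case True then show ?thesis by (simp add: ell_def)
    next
      case False
      then have "a j - a l \<noteq> 0" "exp (a j - a l) \<noteq> 1" using neq that cond by auto
      then show ?thesis using False by (simp add: ell_def)
    qed
    have GT1: "G (cml n a P X) = X ** mexp A" for X
    proof -
      have "dcl n a P (cml n a P X) = X"
        unfolding dcl_gs cml_gs s.gs_gs
        by (subst gs_cong[where h="\<lambda>_ _. 1"]) (simp_all add: nz s.gs_one)
      then show ?thesis using D1[of "cml n a P X"] by simp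
    qed
    have GT2: "G (cmr n a P X) = mexp A ** X" for X
    proof -
      have "dcr n a P (cmr n a P X) = X"
        unfolding dcr_gs cmr_gs s.gs_gs
        by (subst gs_cong[where h="\<lambda>_ _. 1"]) (simp_all add: nz s.gs_one)
      then show ?thesis using D2[of "cmr n a P X"] by simp
    qed
    show ?thesis
      using case3[OF C0 C1 K3(1) E0 E1 K3(2)] case4[OF C0 C1 K4(1) E0 E1 K4(2)] GT1 GT2 by blast
  qed
  show ?thesis using P1 P2 P34 by blast
qed


end
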